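(* Let $V$ be a graded generalized Eulerian $A_n(K)$-module and let $1\le r\le n$. Then: (1) for all $\nu\ge0$, $H^\nu(\partial_r,\partial_{r+1},\dots,\partial_n;V)(-n+r-1)$ is a generalized Eulerian $A_{r-1}(K)$-module; (2) for all $\nu\ge0$, $H^\nu(X_r,\dots,X_n;V)$ is a generalized Eulerian $A_{r-1}(K)$-module; (3) for all $\nu\ge0$, $H^\nu(X_1,\dots,X_{r-1},\partial_r,\partial_{r+1},\dots,\partial_n;V)$ is a graded $K$-vector space concentrated in degree $-n+r-1$.
   Context: Let $K$ be a field of characteristic zero, $R=K[X_1,\dots,X_n]$ with standard grading. $A_n(K)=K\langle X_1,\dots,X_n,\partial_1,\dots,\partial_n\rangle$ is the $n$-th Weyl algebra ($\partial_iX_j-X_j\partial_i=\delta_{ij}$), graded by $\deg X_i=1$, $\deg\partial_i=-1$. The Euler operator is $\mathcal E_n=\sum_{i=1}^nX_i\partial_i$; $|z|$ denotes the degree of a homogeneous $z$. A graded left $A_n(K)$-module $M$ is generalized Eulerian if for every homogeneous $z\in M$ there is $a\ge1$ with $(\mathcal E_n-|z|)^az=0$. For $m\le n$, $A_m(K)=K\langle X_1,\dots,X_m,\partial_1,\dots,\partial_m\rangle\subseteq A_n(K)$ with Euler operator $\mathcal E_m=\sum_{i\le m}X_i\partial_i$, and "generalized Eulerian $A_m(K)$-module" is defined with $\mathcal E_m$; for $m=0$, $A_0(K)=K$, $\mathcal E_0=0$, and a graded vector space is generalized Eulerian iff it is concentrated in degree $0$. $M(l)_j=M_{j+l}$. Koszul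 (co)homology: for pairwise commuting homogeneous $u_1,\dots,u_\ell\in A_n(K)$ and a graded left $A_n(K)$-module $V$, the Koszul complex has $K_p=\bigoplus_{i_1<\dots<i_p}V(-(\deg u_{i_1}+\dots+\deg u_{i_p}))$ with the usual Koszul differentials (left multiplication by the $u_i$ with signs), homogeneous of degree $0$, so $H_0(u;V)=V/\sum u_iV$ with the grading of $V$. $H_p(u_1,\dots,u_\ell;V)$ denotes its homology and $H^\nu(u_1,\dots,u_\ell;V):=H_{\ell-\nu}(u_1,\dots,u_\ell;V)$. Elements of $A_n(K)$ commuting with all $u_i$ act on these; in particular $H^\nu(\partial_r,\dots,\partial_n;V)$ and $H^\nu(X_r,\dots,X_n;V)$ are graded $A_{r-1}(K)$-modules. *)

theory Defs
  imports Complex_Main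
begin

text \<open>A left module over the n-th Weyl algebra A_n(K), given by its generators:
  a K-vector space (scalar multiplication scale) with K-linear operators
  X i, D i (i = 1..n) satisfying the defining relations of A_n(K).\<close>
definition weyl_module ::
  "('k::field \<Rightarrow> 'v::ab_group_add \<Rightarrow> 'v) \<Rightarrow> nat \<Rightarrow> (nat \<Rightarrow> 'v \<Rightarrow> 'v) \<Rightarrow> (nat \<Rightarrow> 'v \<Rightarrow> 'v) \<Rightarrow> bool" where
  "weyl_module scale n X D \<longleftrightarrow>
     Vector_Spaces.vector_space scale \<and>
     (\<forall>i\<in>{1..n}. Vector_Spaces.linear scale scale (X i) \<and> Vector_Spaces.linear scale scale (D i)) \<and>
     (\<forall>i\<in>{1..n}. \<forall>j\<in>{1..n}. \<forall>v.
        X i (X j v) = X j (X i v) \<and> D i (D j v) = D j (D i v) \<and>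
        D i (X j v) - X j (D i v) = (if i = j then v else 0))"

definition graded_weyl_module ::
  "('k::field \<Rightarrow> 'v::ab_group_add \<Rightarrow> 'v) \<Rightarrow> nat \<Rightarrow> (nat \<Rightarrow> 'v \<Rightarrow> 'v) \<Rightarrow> (nat \<Rightarrow> 'v \<Rightarrow> 'v)
     \<Rightarrow> (int \<Rightarrow> 'v set) \<Rightarrow> bool" where
  "graded_weyl_module scale n X D G \<longleftrightarrow>
     weyl_module scale n X D \<and>
     (\<forall>j. module.subspace scale (G j)) \<and>
     (\<forall>v. \<exists>!c :: int \<Rightarrow> 'v. finite {j. c j \<noteq> 0} \<and> (\<forall>j. c j \<in> G j) \<and> v = (\<Sum>j\<in>{j. c j \<noteq> 0}. c j)) \<and>
     (\<forall>i\<in>{1..n}. \<forall>j. \<forall>v\<in>G j. X i v \<in> G (j + 1) \<and> D i v \<in> G (j - 1))"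

definition euler :: "(nat \<Rightarrow> 'v \<Rightarrow> 'v) \<Rightarrow> (nat \<Rightarrow> 'v \<Rightarrow> 'v) \<Rightarrow> nat \<Rightarrow> 'v \<Rightarrow> 'v::comm_monoid_add" where
  "euler X D m v = (\<Sum>i=1..m. X i (D i v))"

definition gen_eulerian ::
  "('k::field \<Rightarrow> 'v::ab_group_add \<Rightarrow> 'v) \<Rightarrow> nat \<Rightarrow> (nat \<Rightarrow> 'v \<Rightarrow> 'v) \<Rightarrow> (nat \<Rightarrow> 'v \<Rightarrow> 'v)
     \<Rightarrow> (int \<Rightarrow> 'v set) \<Rightarrow> bool" where
  "gen_eulerian scale n X D G \<longleftrightarrow>
     (\<forall>j. \<forall>z\<in>G j. \<exists>a\<ge>1. ((\<lambda>v. euler X D n v - scale (of_int j) v) ^^ a) z = 0)"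

text \<open>Koszul complex of commuting operators u 0, ..., u (l-1) on V:
  K_p = direct sum over subsets S of {0..<l} with card S = p of copies of V,
  an element being a function from index sets to V supported on such S.\<close>
definition koszul_chains :: "nat \<Rightarrow> int \<Rightarrow> (nat set \<Rightarrow> 'v::zero) set" where
  "koszul_chains l p = {c. \<forall>S. c S \<noteq> 0 \<longrightarrow> S \<subseteq> {..<l} \<and> int (card S) = p}"

text \<open>Koszul differential: d(v e_S) = sum_k (-1)^(k-1) (u_{i_k} v) e_{S - {i_k}}.\<close>
definition koszul_diff :: "nat \<Rightarrow> (nat \<Rightarrow> 'v \<Rightarrow> 'v::ab_group_add) \<Rightarrow> (nat set \<Rightarrow> 'v) \<Rightarrow> nat set \<Rightarrow> 'v" where
  "koszul_diff l u c T =
     (if T \<subseteq> {..<l} then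
        (\<Sum>i\<in>{..<l} - T. (if even (card {t\<in>T. t < i}) then u i (c (insert i T))
                                                         else - u i (c (insert i T))))
      else 0)"

text \<open>Homogeneity of degree d in K_p: the S-component lies in V(-sum_{i in S} deg u_i)_d.\<close>
definition koszul_homog :: "(int \<Rightarrow> 'v set) \<Rightarrow> (nat \<Rightarrow> int) \<Rightarrow> int \<Rightarrow> (nat set \<Rightarrow> 'v) \<Rightarrow> bool" where
  "koszul_homog G dg d c \<longleftrightarrow> (\<forall>S. c S \<in> G (d - (\<Sum>i\<in>S. dg i)))"

definition koszul_cycle :: "nat \<Rightarrow> (nat \<Rightarrow> 'v \<Rightarrow> 'v::ab_group_add) \<Rightarrow> int \<Rightarrow> (nat set \<Rightarrow> 'v) \<Rightarrow> bool" where
  "koszul_cycle l u p c \<longleftrightarrow> c \<in> koszul_chains l p \<and> koszul_diff l u c = (\<lambda>T. 0)"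

definition koszul_boundary :: "nat \<Rightarrow> (nat \<Rightarrow> 'v \<Rightarrow> 'v::ab_group_add) \<Rightarrow> int \<Rightarrow> (nat set \<Rightarrow> 'v) \<Rightarrow> bool" where
  "koszul_boundary l u p c \<longleftrightarrow> (\<exists>b\<in>koszul_chains l (p + 1). c = koszul_diff l u b)"

text \<open>H^nu(u_0,...,u_(l-1); V)(tw) = H_(l-nu)(...)(tw) is a generalized Eulerian
  A_m(K)-module: every homogeneous class, i.e. the class of a homogeneous cycle of
  degree d (degree d - tw after the twist), is killed by a power of E_m - (d - tw),
  E_m acting componentwise.\<close>
definition koszul_coh_gen_eulerian ::
  "('k::field \<Rightarrow> 'v::ab_group_add \<Rightarrow> 'v) \<Rightarrow> nat \<Rightarrow> (nat \<Rightarrow> 'v \<Rightarrow> 'v) \<Rightarrow> (nat \<Rightarrow> 'v \<Rightarrow> 'v)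
     \<Rightarrow> (int \<Rightarrow> 'v set) \<Rightarrow> nat \<Rightarrow> (nat \<Rightarrow> 'v \<Rightarrow> 'v) \<Rightarrow> (nat \<Rightarrow> int) \<Rightarrow> nat \<Rightarrow> int \<Rightarrow> bool" where
  "koszul_coh_gen_eulerian scale m X D G l u dg \<nu> tw \<longleftrightarrow>
     (\<forall>d c. koszul_cycle l u (int l - int \<nu>) c \<and> koszul_homog G dg d c \<longrightarrow>
        (\<exists>a\<ge>1. koszul_boundary l u (int l - int \<nu>)
                 (((\<lambda>c S. euler X D m (c S) - scale (of_int (d - tw)) (c S)) ^^ a) c)))"

definition koszul_coh_concentrated ::
  "(int \<Rightarrow> 'v::ab_group_add set) \<Rightarrow> nat \<Rightarrow> (nat \<Rightarrow> 'v \<Rightarrow> 'v) \<Rightarrow> (nat \<Rightarrow> int) \<Rightarrow> nat \<Rightarrow> int \<Rightarrow> bool" where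
  "koszul_coh_concentrated G l u dg \<nu> e \<longleftrightarrow>
     (\<forall>d c. koszul_cycle l u (int l - int \<nu>) c \<and> koszul_homog G dg d c \<and> d \<noteq> e \<longrightarrow>
        koszul_boundary l u (int l - int \<nu>) c)"

end

theory Submission imports Defs begin


definition sg :: "bool \<Rightarrow> 'v::ab_group_add \<Rightarrow> 'v" where
  "sg b v = (if b then v else - v)"

lemma sg_sg: "sg a (sg b v) = sg (a = b) v" by (auto simp: sg_def)
lemma sg_True[simp]: "sg True v = v" by (simp add: sg_def)
lemma sg_add: "sg a (x + y) = sg a x + sg a y" by (auto simp: sg_def)
lemma sg_sum: "sg a (sum f A) = (\<Sum>x\<in>A. sg a (f x))" by (auto simp: sg_def sum_negf)
lemma sg_opp: "(a = b) = (\<not> (a' = b')) \<Longrightarrow> sg a (sg b y) + sg a' (sg b' y) = 0"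
  by (auto simp: sg_def)

definition Op :: "(nat set \<Rightarrow> 'v \<Rightarrow> 'v) \<Rightarrow> (nat set \<Rightarrow> 'v) \<Rightarrow> nat set \<Rightarrow> 'v" where
  "Op h c = (\<lambda>S. h S (c S))"

lemma Op_pow: "(Op h ^^ a) c = Op (\<lambda>S. h S ^^ a) c"
  by (induction a) (auto simp: Op_def)

lemma diff_alt: "koszul_diff l u c T =
     (if T \<subseteq> {..<l} then (\<Sum>i\<in>{..<l} - T. sg (even (card {t\<in>T. t < i})) (u i (c (insert i T)))) else 0)"
  unfolding koszul_diff_def sg_def by simp

locale wk =
  fixes scale :: "'k::field_char_0 \<Rightarrow> 'v::ab_group_add \<Rightarrow> 'v"
    and n :: nat and X D :: "nat \<Rightarrow> 'v \<Rightarrow> 'v" and G :: "int \<Rightarrow> 'v set"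
  assumes gw: "graded_weyl_module scale n X D G"
begin

lemma vs: "Vector_Spaces.vector_space scale"
  using gw by (simp add: graded_weyl_module_def weyl_module_def)

sublocale vs: vector_space scale by (rule vs)

lemma linX: "i \<in> {1..n} \<Longrightarrow> Vector_Spaces.linear scale scale (X i)"
  using gw by (simp add: graded_weyl_module_def weyl_module_def)
lemma linD: "i \<in> {1..n} \<Longrightarrow> Vector_Spaces.linear scale scale (D i)"
  using gw by (simp add: graded_weyl_module_def weyl_module_def)

lemma homX: "i \<in> {1..n} \<Longrightarrow> module_hom scale scale (X i)"
  using linX by (simp add: module_hom_iff_linear)
lemma homD: "i \<in> {1..n} \<Longrightarrow> module_hom scale scale (D i)"
  using linD by (simp add: module_hom_iff_linear)

lemma XX: "i \<in> {1..n} \<Longrightarrow> j \<in> {1..n} \<Longrightarrow> X i (X j v) = X j (X i v)"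
  using gw by (simp add: graded_weyl_module_def weyl_module_def)
lemma DD: "i \<in> {1..n} \<Longrightarrow> j \<in> {1..n} \<Longrightarrow> D i (D j v) = D j (D i v)"
  using gw by (simp add: graded_weyl_module_def weyl_module_def)
lemma DX: "i \<in> {1..n} \<Longrightarrow> j \<in> {1..n} \<Longrightarrow> D i (X j v) = X j (D i v) + (if i = j then v else 0)"
proof -
  assume a: "i \<in> {1..n}" "j \<in> {1..n}"
  then have "D i (X j v) - X j (D i v) = (if i = j then v else 0)"
    using gw by (simp add: graded_weyl_module_def weyl_module_def)
  then show ?thesis by (simp add: algebra_simps)
qed

lemma subsp: "vs.subspace (G j)"
  using gw by (simp add: graded_weyl_module_def)
lemma XG: "i \<in> {1..n} \<Longrightarrow> v \<in> G j \<Longrightarrow> X i v \<in> G (j + 1)"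
  using gw by (simp add: graded_weyl_module_def)
lemma DG: "i \<in> {1..n} \<Longrightarrow> v \<in> G j \<Longrightarrow> D i v \<in> G (j - 1)"
  using gw by (simp add: graded_weyl_module_def)

lemma Xadd: "i \<in> {1..n} \<Longrightarrow> X i (a + b) = X i a + X i b" using homX module_hom.add by metis
lemma Xzero: "i \<in> {1..n} \<Longrightarrow> X i 0 = 0" using homX module_hom.zero by metis
lemma Xneg: "i \<in> {1..n} \<Longrightarrow> X i (- a) = - X i a" using homX module_hom.neg by metis
lemma Xdiff: "i \<in> {1..n} \<Longrightarrow> X i (a - b) = X i a - X i b" using homX module_hom.diff by metis
lemma Xsum: "i \<in> {1..n} \<Longrightarrow> X i (sum f A) = (\<Sum>x\<in>A. X i (f x))" using homX module_hom.sum by metis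
lemma Xscale: "i \<in> {1..n} \<Longrightarrow> X i (scale c a) = scale c (X i a)" using homX module_hom.scale by metis
lemma Dadd: "i \<in> {1..n} \<Longrightarrow> D i (a + b) = D i a + D i b" using homD module_hom.add by metis
lemma Dzero: "i \<in> {1..n} \<Longrightarrow> D i 0 = 0" using homD module_hom.zero by metis
lemma Dneg: "i \<in> {1..n} \<Longrightarrow> D i (- a) = - D i a" using homD module_hom.neg by metis
lemma Ddiff: "i \<in> {1..n} \<Longrightarrow> D i (a - b) = D i a - D i b" using homD module_hom.diff by metis
lemma Dsum: "i \<in> {1..n} \<Longrightarrow> D i (sum f A) = (\<Sum>x\<in>A. D i (f x))" using homD module_hom.sum by metis
lemma Dscale: "i \<in> {1..n} \<Longrightarrow> D i (scale c a) = scale c (D i a)" using homD module_hom.scale by metis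

lemma XD_hom: "i \<in> {1..n} \<Longrightarrow> module_hom scale scale (\<lambda>v. X i (D i v))"
  using homX homD module_hom.add module_hom.scale
  by (simp add: module_hom_def module_hom_axioms_def vs.module_axioms)

lemma euler_hom: "m \<le> n \<Longrightarrow> module_hom scale scale (euler X D m)"
proof -
  assume m: "m \<le> n"
  show ?thesis
    unfolding module_hom_def module_hom_axioms_def euler_def
  proof (intro conjI allI)
    show "module scale" by (rule vs.module_axioms)
    show "module scale" by (rule vs.module_axioms)
    fix b1 b2 show "(\<Sum>i = 1..m. X i (D i (b1 + b2))) = (\<Sum>i = 1..m. X i (D i b1)) + (\<Sum>i = 1..m. X i (D i b2))"
      using m by (simp add: Dadd Xadd sum.distrib)
  next
    fix r b show "(\<Sum>i = 1..m. X i (D i (scale r b))) = scale r (\<Sum>i = 1..m. X i (D i b))"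
      using m by (simp add: Dscale Xscale vs.scale_sum_right)
  qed
qed

lemma Eadd: "m \<le> n \<Longrightarrow> euler X D m (a + b) = euler X D m a + euler X D m b" using euler_hom module_hom.add by metis
lemma Ezero: "m \<le> n \<Longrightarrow> euler X D m 0 = 0" using euler_hom module_hom.zero by metis
lemma Eneg: "m \<le> n \<Longrightarrow> euler X D m (- a) = - euler X D m a" using euler_hom module_hom.neg by metis
lemma Ediff: "m \<le> n \<Longrightarrow> euler X D m (a - b) = euler X D m a - euler X D m b" using euler_hom module_hom.diff by metis
lemma Esum: "m \<le> n \<Longrightarrow> euler X D m (sum f A) = (\<Sum>x\<in>A. euler X D m (f x))" using euler_hom module_hom.sum by metis
lemma Escale: "m \<le> n \<Longrightarrow> euler X D m (scale c a) = scale c (euler X D m a)" using euler_hom module_hom.scale by metis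

lemma euler_X: assumes m: "m \<le> n" and j: "j \<in> {1..n}"
  shows "euler X D m (X j v) = X j (euler X D m v) + (if j \<le> m then X j v else 0)"
proof -
  have "euler X D m (X j v) = (\<Sum>i=1..m. X j (X i (D i v)) + (if i = j then X i v else 0))"
    unfolding euler_def
    by (rule sum.cong) (use m j in \<open>auto simp: DX Xadd Xzero XX\<close>)
  also have "\<dots> = X j (euler X D m v) + (\<Sum>i=1..m. (if i = j then X i v else 0))"
    by (simp add: sum.distrib euler_def Xsum[OF j])
  also have "(\<Sum>i=1..m. (if i = j then X i v else 0)) = (if j \<le> m then X j v else 0)"
    using j by (simp add: sum.delta)
  finally show ?thesis .
qed

lemma euler_D: assumes m: "m \<le> n" and j: "j \<in> {1..n}"
  shows "euler X D m (D j v) = D j (euler X D m v) - (if j \<le> m then D j v else 0)"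
proof -
  have "euler X D m (D j v) = (\<Sum>i=1..m. D j (X i (D i v)) - (if i = j then D i v else 0))"
    unfolding euler_def
  proof (rule sum.cong)
    fix i assume i: "i \<in> {1..m}"
    then have i': "i \<in> {1..n}" using m by auto
    have "X i (D i (D j v)) = X i (D j (D i v))" using DD i' j by metis
    also have "\<dots> = D j (X i (D i v)) - (if j = i then D i v else 0)"
      using DX[OF j i', of "D i v"] by (simp add: algebra_simps)
    finally show "X i (D i (D j v)) = D j (X i (D i v)) - (if i = j then D i v else 0)" by auto
  qed simp
  also have "\<dots> = D j (euler X D m v) - (\<Sum>i=1..m. (if i = j then D i v else 0))"
    by (simp add: sum_subtractf euler_def Dsum[OF j])
  also have "(\<Sum>i=1..m. (if i = j then D i v else 0)) = (if j \<le> m then D j v else 0)"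
    using j by (simp add: sum.delta)
  finally show ?thesis .
qed

lemma euler_G: assumes m: "m \<le> n" and v: "v \<in> G j" shows "euler X D m v \<in> G j"
  unfolding euler_def
proof (rule vs.subspace_sum[OF subsp])
  fix i assume "i \<in> {1..m}"
  then have i: "i \<in> {1..n}" using m by auto
  have "D i v \<in> G (j - 1)" using DG[OF i v] .
  from XG[OF i this] show "X i (D i v) \<in> G j" by simp
qed

end

definition uop :: "(nat \<Rightarrow> 'v \<Rightarrow> 'v) \<Rightarrow> (nat \<Rightarrow> 'v \<Rightarrow> 'v) \<Rightarrow> (nat \<Rightarrow> nat) \<Rightarrow> (nat \<Rightarrow> bool) \<Rightarrow> nat \<Rightarrow> 'v \<Rightarrow> 'v" where
  "uop X D k t i = (if t i then X (k i) else D (k i))"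
definition wop :: "(nat \<Rightarrow> 'v \<Rightarrow> 'v) \<Rightarrow> (nat \<Rightarrow> 'v \<Rightarrow> 'v) \<Rightarrow> (nat \<Rightarrow> nat) \<Rightarrow> (nat \<Rightarrow> bool) \<Rightarrow> nat \<Rightarrow> 'v \<Rightarrow> 'v" where
  "wop X D k t i = (if t i then D (k i) else X (k i))"
definition dgf :: "(nat \<Rightarrow> bool) \<Rightarrow> nat \<Rightarrow> int" where
  "dgf t i = (if t i then 1 else -1)"
definition hom_s :: "nat \<Rightarrow> (nat \<Rightarrow> 'v \<Rightarrow> 'v::ab_group_add) \<Rightarrow> (nat set \<Rightarrow> 'v) \<Rightarrow> nat set \<Rightarrow> 'v" where
  "hom_s l w c T = (if T \<subseteq> {..<l} then (\<Sum>j\<in>T. sg (even (card {x\<in>T. x < j})) (w j (c (T - {j})))) else 0)"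

locale kz = wk scale n X D G
  for scale :: "'k::field_char_0 \<Rightarrow> 'v::ab_group_add \<Rightarrow> 'v"
    and n :: nat and X D :: "nat \<Rightarrow> 'v \<Rightarrow> 'v" and G :: "int \<Rightarrow> 'v set" +
  fixes l :: nat and k :: "nat \<Rightarrow> nat" and t :: "nat \<Rightarrow> bool"
  assumes kin: "\<And>i. i < l \<Longrightarrow> k i \<in> {1..n}" and kinj: "inj_on k {..<l}"
begin

abbreviation "u \<equiv> uop X D k t"
abbreviation "w \<equiv> wop X D k t"

lemma u_hom: "i < l \<Longrightarrow> module_hom scale scale (u i)"
  using kin[of i] homX homD by (simp add: uop_def)
lemma w_hom: "i < l \<Longrightarrow> module_hom scale scale (w i)"
  using kin[of i] homX homD by (simp add: wop_def)

lemma uadd: "i < l \<Longrightarrow> u i (a + b) = u i a + u i b" using u_hom module_hom.add by metis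
lemma uzero: "i < l \<Longrightarrow> u i 0 = 0" using u_hom module_hom.zero by metis
lemma uneg: "i < l \<Longrightarrow> u i (- a) = - u i a" using u_hom module_hom.neg by metis
lemma udiff: "i < l \<Longrightarrow> u i (a - b) = u i a - u i b" using u_hom module_hom.diff by metis
lemma usum: "i < l \<Longrightarrow> u i (sum f A) = (\<Sum>x\<in>A. u i (f x))" using u_hom module_hom.sum by metis
lemma uscale: "i < l \<Longrightarrow> u i (scale c a) = scale c (u i a)" using u_hom module_hom.scale by metis
lemma wzero: "i < l \<Longrightarrow> w i 0 = 0" using w_hom module_hom.zero by metis
lemma wsum: "i < l \<Longrightarrow> w i (sum f A) = (\<Sum>x\<in>A. w i (f x))" using w_hom module_hom.sum by metis
lemma wneg: "i < l \<Longrightarrow> w i (- a) = - w i a" using w_hom module_hom.neg by metis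

lemma usg: "i < l \<Longrightarrow> u i (sg b a) = sg b (u i a)" by (simp add: sg_def uneg)
lemma wsg: "i < l \<Longrightarrow> w i (sg b a) = sg b (w i a)" by (simp add: sg_def wneg)

lemma uw_comm: assumes "i < l" "j < l" "i \<noteq> j" shows "u i (w j v) = w j (u i v)"
proof -
  have ne: "k i \<noteq> k j" using kinj assms by (auto simp: inj_on_def)
  show ?thesis using kin[OF assms(1)] kin[OF assms(2)] ne
    by (auto simp: uop_def wop_def XX DD DX)
qed

lemma uw_diag: assumes "i < l"
  shows "u i (w i v) = X (k i) (D (k i) v) + (if t i then 0 else v)"
    and "w i (u i v) = X (k i) (D (k i) v) + (if t i then v else 0)"
  using kin[OF assms] by (auto simp: uop_def wop_def DX)


lemma wadd: "i < l \<Longrightarrow> w i (a + b) = w i a + w i b" using w_hom module_hom.add by metis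

end

lemma par_remove: fixes T :: "nat set" assumes "finite T" "j \<in> T"
  shows "even (card {x\<in>T. x < i}) = (even (card {x\<in>T - {j}. x < i}) = (\<not> j < i))"
proof (cases "j < i")
  case True
  have "{x\<in>T. x < i} = insert j {x\<in>T - {j}. x < i}" using True assms by auto
  moreover have "card (insert j {x\<in>T - {j}. x < i}) = Suc (card {x\<in>T - {j}. x < i})"
    using assms by (intro card_insert_disjoint) auto
  ultimately show ?thesis using True by simp
next
  case False
  have "{x\<in>T. x < i} = {x\<in>T - {j}. x < i}" using False by auto
  then show ?thesis using False by simp
qed

lemma par_insert: fixes T :: "nat set" assumes "finite T" "i \<notin> T"
  shows "even (card {x\<in>insert i T. x < j}) = (even (card {x\<in>T. x < j}) = (\<not> i < j))"
  using par_remove[of "insert i T" i j] assms by simp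

lemma par_self_insert: "{x\<in>insert i T. x < i} = {x\<in>T. x < (i::nat)}" by auto
lemma par_self_remove: "{x\<in>T - {i}. x < i} = {x\<in>T. x < (i::nat)}" by auto

context kz begin

lemma diag_count: assumes T: "T \<subseteq> {..<l}"
  shows "(\<Sum>i\<in>{..<l} - T. u i (w i v)) + (\<Sum>j\<in>T. w j (u j v)) =
    (\<Sum>i<l. X (k i) (D (k i) v)) + scale (of_int (int (card {i\<in>{..<l}. \<not> t i}) + (\<Sum>i\<in>T. dgf t i))) v"
proof -
  define P where "P = {..<l} - T"
  have fT: "finite T" using T finite_subset by blast
  have fP: "finite P" by (simp add: P_def)
  have PT: "P \<inter> T = {}" "P \<union> T = {..<l}" using T by (auto simp: P_def)
  have "(\<Sum>i\<in>P. u i (w i v)) = (\<Sum>i\<in>P. X (k i) (D (k i) v)) + (\<Sum>i\<in>P. (if t i then 0 else v))"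
    by (simp add: uw_diag P_def sum.distrib)
  moreover have "(\<Sum>j\<in>T. w j (u j v)) = (\<Sum>i\<in>T. X (k i) (D (k i) v)) + (\<Sum>i\<in>T. (if t i then v else 0))"
    unfolding sum.distrib[symmetric] by (rule sum.cong) (use T in \<open>auto simp: uw_diag\<close>)
  moreover have "(\<Sum>i\<in>P. X (k i) (D (k i) v)) + (\<Sum>i\<in>T. X (k i) (D (k i) v)) = (\<Sum>i<l. X (k i) (D (k i) v))"
    using sum.union_disjoint[OF fP fT PT(1), of "\<lambda>i. X (k i) (D (k i) v)"] PT(2) by simp
  moreover have "(\<Sum>i\<in>P. (if t i then 0 else v)) = scale (of_nat (card {i\<in>P. \<not> t i})) v"
    using fP by (simp add: sum.If_cases vs.sum_constant_scale Int_def conj_commute)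
  moreover have "(\<Sum>i\<in>T. (if t i then v else 0)) = scale (of_nat (card {i\<in>T. t i})) v"
    using fT by (simp add: sum.If_cases vs.sum_constant_scale Int_def conj_commute)
  moreover have "int (card {i\<in>{..<l}. \<not> t i}) + (\<Sum>i\<in>T. dgf t i) = int (card {i\<in>P. \<not> t i}) + int (card {i\<in>T. t i})"
  proof -
    have "{i\<in>{..<l}. \<not> t i} = {i\<in>P. \<not> t i} \<union> {i\<in>T. \<not> t i}" using PT by auto
    then have c1: "card {i\<in>{..<l}. \<not> t i} = card {i\<in>P. \<not> t i} + card {i\<in>T. \<not> t i}"
      using fP fT PT(1) by (simp add: card_Un_disjoint disjoint_iff)
    have "(\<Sum>i\<in>T. dgf t i) = int (card {i\<in>T. t i}) - int (card {i\<in>T. \<not> t i})"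
      using fT by (simp add: dgf_def sum.If_cases Int_def conj_commute)
    then show ?thesis using c1 by simp
  qed
  ultimately show ?thesis
    by (simp add: P_def vs.scale_left_distrib algebra_simps)
qed


lemma homotopy: assumes T: "T \<subseteq> {..<l}"
  shows "koszul_diff l u (hom_s l w c) T + hom_s l w (koszul_diff l u c) T
    = (\<Sum>i<l. X (k i) (D (k i) (c T))) + scale (of_int (int (card {i\<in>{..<l}. \<not> t i}) + (\<Sum>i\<in>T. dgf t i))) (c T)"
proof -
  define P where "P = {..<l} - T"
  define par where "par = (\<lambda>j A. even (card {x\<in>A. x < (j::nat)}))"
  define A where "A = (\<lambda>i j. sg (par i T) (sg (par j (insert i T)) (u i (w j (c (insert i (T - {j})))))))"
  define B where "B = (\<lambda>i j. sg (par j T) (sg (par i (T - {j})) (w j (u i (c (insert i (T - {j})))))))"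
  have fT: "finite T" using T finite_subset by blast
  have fP: "finite P" by (simp add: P_def)
  have L1: "koszul_diff l u (hom_s l w c) T = (\<Sum>i\<in>P. u i (w i (c T))) + (\<Sum>i\<in>P. \<Sum>j\<in>T. A i j)"
  proof -
    have "koszul_diff l u (hom_s l w c) T = (\<Sum>i\<in>P. sg (par i T) (u i (hom_s l w c (insert i T))))"
      using T by (simp add: diff_alt P_def par_def)
    also have "\<dots> = (\<Sum>i\<in>P. u i (w i (c T)) + (\<Sum>j\<in>T. A i j))"
    proof (rule sum.cong)
      fix i assume i: "i \<in> P"
      then have il: "i < l" and iT: "i \<notin> T" by (auto simp: P_def)
      have "hom_s l w c (insert i T) = (\<Sum>j\<in>insert i T. sg (par j (insert i T)) (w j (c (insert i T - {j}))))"
        using T il by (simp add: hom_s_def par_def)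
      also have "\<dots> = sg (par i T) (w i (c T)) + (\<Sum>j\<in>T. sg (par j (insert i T)) (w j (c (insert i (T - {j})))))"
      proof -
        have "insert i T - {i} = T" using iT by auto
        moreover have "\<And>j. j \<in> T \<Longrightarrow> insert i T - {j} = insert i (T - {j})" using iT by auto
        moreover have "par i (insert i T) = par i T" unfolding par_def par_self_insert ..
        ultimately show ?thesis using fT iT
          by (simp add: sum.insert)
      qed
      finally have h: "hom_s l w c (insert i T) = \<dots>" .
      have "j \<in> T \<Longrightarrow> j < l" for j using T by auto
      then show "sg (par i T) (u i (hom_s l w c (insert i T))) = u i (w i (c T)) + (\<Sum>j\<in>T. A i j)"
        unfolding h A_def using il
        by (simp add: uadd usum usg sg_add sg_sum sg_sg)
    qed simp
    finally show ?thesis by (simp add: sum.distrib)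
  qed
  have L2: "hom_s l w (koszul_diff l u c) T = (\<Sum>j\<in>T. w j (u j (c T))) + (\<Sum>j\<in>T. \<Sum>i\<in>P. B i j)"
  proof -
    have "hom_s l w (koszul_diff l u c) T = (\<Sum>j\<in>T. sg (par j T) (w j (koszul_diff l u c (T - {j}))))"
      using T by (simp add: hom_s_def par_def)
    also have "\<dots> = (\<Sum>j\<in>T. w j (u j (c T)) + (\<Sum>i\<in>P. B i j))"
    proof (rule sum.cong)
      fix j assume j: "j \<in> T"
      then have jl: "j < l" and jP: "j \<notin> P" using T by (auto simp: P_def)
      have e: "{..<l} - (T - {j}) = insert j P" using j T by (auto simp: P_def)
      have "koszul_diff l u c (T - {j}) = (\<Sum>i\<in>insert j P. sg (par i (T - {j})) (u i (c (insert i (T - {j})))))"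
        using T by (auto simp: diff_alt e par_def)
      also have "\<dots> = sg (par j T) (u j (c T)) + (\<Sum>i\<in>P. sg (par i (T - {j})) (u i (c (insert i (T - {j})))))"
      proof -
        have "insert j (T - {j}) = T" using j by auto
        moreover have "par j (T - {j}) = par j T" unfolding par_def par_self_remove ..
        ultimately show ?thesis using fP jP by simp
      qed
      finally have h: "koszul_diff l u c (T - {j}) = \<dots>" .
      have "i \<in> P \<Longrightarrow> i < l" for i by (auto simp: P_def)
      then show "sg (par j T) (w j (koszul_diff l u c (T - {j}))) = w j (u j (c T)) + (\<Sum>i\<in>P. B i j)"
        unfolding h B_def using jl
        by (simp add: wadd wsum wsg sg_add sg_sum sg_sg)
    qed simp
    finally show ?thesis by (simp add: sum.distrib)
  qed
  have C: "(\<Sum>i\<in>P. \<Sum>j\<in>T. A i j) + (\<Sum>j\<in>T. \<Sum>i\<in>P. B i j) = 0"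
  proof -
    have "(\<Sum>j\<in>T. \<Sum>i\<in>P. B i j) = (\<Sum>i\<in>P. \<Sum>j\<in>T. B i j)" by (rule sum.swap)
    then have "(\<Sum>i\<in>P. \<Sum>j\<in>T. A i j) + (\<Sum>j\<in>T. \<Sum>i\<in>P. B i j) = (\<Sum>i\<in>P. \<Sum>j\<in>T. A i j + B i j)"
      by (simp add: sum.distrib)
    also have "\<dots> = 0"
    proof (intro sum.neutral ballI)
      fix i j assume i: "i \<in> P" and j: "j \<in> T"
      have il: "i < l" and jl: "j < l" and ij: "i \<noteq> j" and iT: "i \<notin> T" using i j T by (auto simp: P_def)
      have p1: "par i T = (par i (T - {j}) = (\<not> j < i))" using par_remove[OF fT j] by (simp add: par_def)
      have p2: "par j (insert i T) = (par j T = (\<not> i < j))" using par_insert[OF fT iT] by (simp add: par_def)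
      have "A i j + B i j = sg (par i T) (sg (par j (insert i T)) (w j (u i (c (insert i (T - {j})))))) +
                            sg (par j T) (sg (par i (T - {j})) (w j (u i (c (insert i (T - {j}))))))"
        unfolding A_def B_def using uw_comm[OF il jl ij] by simp
      also have "\<dots> = 0"
        by (rule sg_opp) (use p1 p2 ij in \<open>auto\<close>)
      finally show "A i j + B i j = 0" .
    qed
    finally show ?thesis .
  qed
  have "koszul_diff l u (hom_s l w c) T + hom_s l w (koszul_diff l u c) T
      = ((\<Sum>i\<in>P. u i (w i (c T))) + (\<Sum>j\<in>T. w j (u j (c T)))) + ((\<Sum>i\<in>P. \<Sum>j\<in>T. A i j) + (\<Sum>j\<in>T. \<Sum>i\<in>P. B i j))"
    unfolding L1 L2 by (simp add: algebra_simps)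
  also have "\<dots> = (\<Sum>i\<in>P. u i (w i (c T))) + (\<Sum>j\<in>T. w j (u j (c T)))" using C by simp
  also have "\<dots> = (\<Sum>i<l. X (k i) (D (k i) (c T))) + scale (of_int (int (card {i\<in>{..<l}. \<not> t i}) + (\<Sum>i\<in>T. dgf t i))) (c T)"
    unfolding P_def by (rule diag_count[OF T])
  finally show ?thesis .
qed


abbreviation "kch \<equiv> koszul_chains l"
abbreviation "dff \<equiv> koszul_diff l u"
abbreviation "s \<equiv> hom_s l w"
abbreviation "bnd \<equiv> koszul_boundary l u"

lemma chainsD: "c \<in> kch p \<Longrightarrow> \<not> S \<subseteq> {..<l} \<Longrightarrow> c S = 0"
  by (auto simp: koszul_chains_def)

lemma dff_zero: "dff (\<lambda>S. 0) = (\<lambda>T. 0)"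
  apply (rule ext)
  apply (simp add: diff_alt)
  apply (intro impI sum.neutral ballI)
  apply (simp add: uzero sg_def)
  done

lemma s_zero: "s (\<lambda>S. 0) = (\<lambda>T. 0)"
  by (rule ext) (auto simp: hom_s_def sg_def intro!: sum.neutral wzero)

lemma dff_sub: "dff (\<lambda>S. a S - b S) = (\<lambda>T. dff a T - dff b T)"
  apply (rule ext)
  apply (simp add: diff_alt sum_subtractf[symmetric])
  apply (auto intro!: sum.cong simp: udiff sg_def)
  done

lemma dff_scale: "dff (\<lambda>S. scale x (a S)) = (\<lambda>T. scale x (dff a T))"
  by (rule ext) (auto simp: diff_alt uscale sg_def vs.scale_sum_right intro!: sum.cong)

lemma dff_Op:
  assumes add: "\<And>T. additive (h T)"
    and comm: "\<And>T i v. T \<subseteq> {..<l} \<Longrightarrow> i < l \<Longrightarrow> i \<notin> T \<Longrightarrow> u i (h (insert i T) v) = h T (u i v)"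
  shows "dff (Op h c) = Op h (dff c)"
proof (rule ext)
  fix T
  show "dff (Op h c) T = Op h (dff c) T"
  proof (cases "T \<subseteq> {..<l}")
    case True
    have hs: "h T (sg b v) = sg b (h T v)" for b v
      by (simp add: sg_def additive.minus[OF add])
    show ?thesis using True
      by (auto simp: diff_alt Op_def additive.sum[OF add] hs comm intro!: sum.cong)
  next
    case False
    then show ?thesis by (simp add: diff_alt Op_def additive.zero[OF add])
  qed
qed

lemma additive_pow: fixes f :: "'v \<Rightarrow> 'v" assumes f: "additive f" shows "additive (f ^^ a)"
proof (induction a)
  case 0
  show ?case by (rule additive.intro) simp
next
  case (Suc a)
  show ?case by (rule additive.intro) (simp add: additive.add[OF f] additive.add[OF Suc])
qed

lemma dff_Op_pow:
  assumes add: "\<And>T. additive (h T)"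
    and comm: "\<And>T i v. T \<subseteq> {..<l} \<Longrightarrow> i < l \<Longrightarrow> i \<notin> T \<Longrightarrow> u i (h (insert i T) v) = h T (u i v)"
  shows "dff ((Op h ^^ a) c) = (Op h ^^ a) (dff c)"
  by (induction a) (simp_all add: dff_Op[OF add comm])

lemma Op_chain: assumes h: "(\<And>T. additive (h T))" and c: "c \<in> kch p" shows "Op h c \<in> kch p"
  unfolding koszul_chains_def
proof (intro CollectI allI impI)
  fix S assume "Op h c S \<noteq> 0"
  then have "c S \<noteq> 0" using additive.zero[OF h] by (auto simp: Op_def)
  then show "S \<subseteq> {..<l} \<and> int (card S) = p" using c by (auto simp: koszul_chains_def)
qed

lemma Op_pow_chain: "(\<And>T. additive (h T)) \<Longrightarrow> c \<in> kch p \<Longrightarrow> (Op h ^^ a) c \<in> kch p"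
  by (induction a) (auto intro: Op_chain)

lemma Op_sub: "(\<And>T. additive (h T)) \<Longrightarrow> Op h (\<lambda>S. a S - b S) = (\<lambda>S. Op h a S - Op h b S)"
  by (auto simp: Op_def additive.diff)

lemma Op_pow_sub: "(\<And>T. additive (h T)) \<Longrightarrow> (Op h ^^ q) (\<lambda>S. a S - b S) = (\<lambda>S. (Op h ^^ q) a S - (Op h ^^ q) b S)"
  by (induction q) (simp_all add: Op_sub)

lemma chains_sub: fixes a b :: "nat set \<Rightarrow> 'v" assumes a: "a \<in> kch p" and b: "b \<in> kch p" shows "(\<lambda>S. a S - b S) \<in> kch p"
  unfolding koszul_chains_def
proof (intro CollectI allI impI)
  fix S assume "a S - b S \<noteq> 0"
  then have "a S \<noteq> 0 \<or> b S \<noteq> 0" by auto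
  then show "S \<subseteq> {..<l} \<and> int (card S) = p" using a b by (auto simp: koszul_chains_def)
qed

lemma chains_zero: "(\<lambda>S. 0) \<in> kch p"
  by (auto simp: koszul_chains_def)

lemma s_chain: fixes c :: "nat set \<Rightarrow> 'v" shows "c \<in> kch p \<Longrightarrow> s c \<in> kch (p + 1)"
proof -
  assume c: "c \<in> kch p"
  show ?thesis unfolding koszul_chains_def
  proof (intro CollectI allI impI)
    fix S assume ne: "s c S \<noteq> 0"
    then have S: "S \<subseteq> {..<l}" by (auto simp: hom_s_def split: if_splits)
    then have fS: "finite S" using finite_subset by blast
    from ne S obtain j where j: "j \<in> S" "sg (even (card {x\<in>S. x < j})) (w j (c (S - {j}))) \<noteq> 0"
      by (auto simp: hom_s_def dest: sum.not_neutral_contains_not_neutral)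
    have "c (S - {j}) \<noteq> 0"
    proof
      assume "c (S - {j}) = 0"
      moreover have "j < l" using j S by auto
      ultimately have "w j (c (S - {j})) = 0" using wzero[of j] by simp
      then have "sg (even (card {x\<in>S. x < j})) (w j (c (S - {j}))) = 0"
        by (simp add: sg_def)
      then show False using j(2) by simp
    qed
    then have "int (card (S - {j})) = p" using c by (auto simp: koszul_chains_def)
    moreover have "card S = Suc (card (S - {j}))" using card_Suc_Diff1[OF fS j(1)] by simp
    ultimately have "int (card S) = p + 1" by simp
    then show "S \<subseteq> {..<l} \<and> int (card S) = p + 1" using S by simp
  qed
qed

lemma bnd_dff: "b \<in> kch (p + 1) \<Longrightarrow> bnd p (dff b)"
  by (auto simp: koszul_boundary_def)

lemma bnd_zero: "bnd p (\<lambda>S. 0)"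
  using bnd_dff[OF chains_zero] dff_zero by metis

lemma bnd_scale: "bnd p c \<Longrightarrow> bnd p (\<lambda>S. scale x (c S))"
proof -
  assume "bnd p c"
  then obtain b where b: "b \<in> kch (p + 1)" "c = dff b" by (auto simp: koszul_boundary_def)
  have "(\<lambda>S. scale x (b S)) \<in> kch (p + 1)" using b(1) by (auto simp: koszul_chains_def)
  moreover have "(\<lambda>S. scale x (c S)) = dff (\<lambda>S. scale x (b S))" using b(2) by (simp add: dff_scale)
  ultimately show ?thesis by (auto simp: koszul_boundary_def)
qed

lemma bnd_sub: "bnd p a \<Longrightarrow> bnd p b \<Longrightarrow> bnd p (\<lambda>S. a S - b S)"
proof -
  assume "bnd p a" "bnd p b"
  then obtain x y where "x \<in> kch (p + 1)" "a = dff x" "y \<in> kch (p + 1)" "b = dff y"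
    by (auto simp: koszul_boundary_def)
  then show ?thesis
    by (auto simp: koszul_boundary_def dff_sub[symmetric] intro!: bexI[of _ "\<lambda>S. x S - y S"] chains_sub)
qed


definition "hA d S v = euler X D n v - scale (of_int (d - (\<Sum>i\<in>S. dgf t i))) v"
definition "hF m \<mu> S v = euler X D m v - scale \<mu> v"

lemma hA_add: "additive (hA d S)"
  by (rule additive.intro) (simp add: hA_def Eadd vs.scale_right_distrib algebra_simps)

lemma hF_add: "m \<le> n \<Longrightarrow> additive (hF m \<mu> S)"
  by (rule additive.intro) (simp add: hF_def Eadd vs.scale_right_distrib algebra_simps)

lemma hA_comm: assumes T: "T \<subseteq> {..<l}" and i: "i < l" "i \<notin> T"
  shows "u i (hA d (insert i T) v) = hA d T (u i v)"
proof -
  have fT: "finite T" using T finite_subset by blast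
  have sm: "(\<Sum>j\<in>insert i T. dgf t j) = dgf t i + (\<Sum>j\<in>T. dgf t j)" using fT i by simp
  define m where "m = d - (\<Sum>j\<in>T. dgf t j)"
  have ki: "k i \<in> {1..n}" using kin[OF i(1)] .
  show ?thesis
  proof (cases "t i")
    case True
    have "d - (\<Sum>j\<in>insert i T. dgf t j) = m - 1" unfolding m_def sm by (simp add: dgf_def True)
    then have "hA d (insert i T) v = euler X D n v - scale (of_int (m - 1)) v" unfolding hA_def by simp
    then have "u i (hA d (insert i T) v) = X (k i) (euler X D n v) - scale (of_int m - 1) (X (k i) v)"
      using True ki by (simp add: uop_def Xdiff Xscale)
    also have "X (k i) (euler X D n v) = euler X D n (X (k i) v) - X (k i) v"
      using euler_X[of n "k i" v] ki by simp
    finally show ?thesis using True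
      by (simp add: hA_def uop_def m_def vs.scale_left_diff_distrib)
  next
    case False
    have "d - (\<Sum>j\<in>insert i T. dgf t j) = m + 1" unfolding m_def sm by (simp add: dgf_def False)
    then have "hA d (insert i T) v = euler X D n v - scale (of_int (m + 1)) v" unfolding hA_def by simp
    then have "u i (hA d (insert i T) v) = D (k i) (euler X D n v) - scale (of_int m + 1) (D (k i) v)"
      using False ki by (simp add: uop_def Ddiff Dscale)
    also have "D (k i) (euler X D n v) = euler X D n (D (k i) v) + D (k i) v"
      using euler_D[of n "k i" v] ki by simp
    finally show ?thesis using False
      by (simp add: hA_def uop_def m_def vs.scale_left_distrib)
  qed
qed

lemma hF_comm: assumes m: "m \<le> n" and mk: "\<And>i. i < l \<Longrightarrow> m < k i" and i: "i < l"
  shows "u i (hF m \<mu> S' v) = hF m \<mu> S (u i v)"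
proof -
  have ki: "k i \<in> {1..n}" using kin[OF i] .
  have nle: "\<not> k i \<le> m" using mk[OF i] by simp
  show ?thesis
    using euler_X[OF m ki, of v] euler_D[OF m ki, of v] nle ki
    by (cases "t i") (simp_all add: hF_def uop_def Xdiff Xscale Ddiff Dscale)
qed

lemma hA_G: "v \<in> G j \<Longrightarrow> hA d S v \<in> G j"
  unfolding hA_def
  by (intro vs.subspace_diff[OF subsp] vs.subspace_scale[OF subsp] euler_G) auto

lemma Op_hA_homog: "koszul_homog G (dgf t) d c \<Longrightarrow> koszul_homog G (dgf t) d (Op (hA d) c)"
  by (simp add: koszul_homog_def Op_def hA_G)

lemma funpow_zero: fixes f :: "'a::zero \<Rightarrow> 'a" shows "f 0 = 0 \<Longrightarrow> (f ^^ a) 0 = 0"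
  by (induction a) simp_all

lemma A_nil:
  assumes ge: "gen_eulerian scale n X D G" and c: "c \<in> kch p" and h: "koszul_homog G (dgf t) d c"
  shows "\<exists>a\<ge>1. (Op (hA d) ^^ a) c = (\<lambda>S. 0)"
proof -
  have "\<forall>S\<in>Pow {..<l}. \<exists>a. a \<ge> 1 \<and> (hA d S ^^ a) (c S) = 0"
  proof
    fix S
    have "c S \<in> G (d - (\<Sum>i\<in>S. dgf t i))" using h by (simp add: koszul_homog_def)
    then show "\<exists>a. a \<ge> 1 \<and> (hA d S ^^ a) (c S) = 0"
      using ge unfolding gen_eulerian_def hA_def by blast
  qed
  then obtain af where af: "\<And>S. S \<in> Pow {..<l} \<Longrightarrow> (hA d S ^^ af S) (c S) = 0"
    by metis
  define a where "a = Suc (\<Sum>S\<in>Pow {..<l}. af S)"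
  have z: "(hA d S ^^ a) (c S) = 0" for S
  proof (cases "S \<in> Pow {..<l}")
    case True
    have le: "af S \<le> (\<Sum>S\<in>Pow {..<l}. af S)"
      using True by (intro member_le_sum) auto
    then have "a = (a - af S) + af S" by (simp add: a_def)
    then have "(hA d S ^^ a) (c S) = (hA d S ^^ (a - af S)) ((hA d S ^^ af S) (c S))"
      by (metis funpow_add o_apply)
    also have "\<dots> = 0" using af[OF True] funpow_zero additive.zero[OF hA_add] by metis
    finally show ?thesis .
  next
    case False
    then have "c S = 0" using c by (auto simp: koszul_chains_def)
    then show ?thesis using funpow_zero additive.zero[OF hA_add] by metis
  qed
  have "(Op (hA d) ^^ a) c = (\<lambda>S. 0)" by (simp add: Op_pow Op_def z)
  moreover have "a \<ge> 1" by (simp add: a_def)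
  ultimately show ?thesis by blast
qed


definition "theta = int (card {i\<in>{..<l}. \<not> t i})"
definition "Ep v = (\<Sum>i<l. X (k i) (D (k i) v))"

lemma Ep_zero: "Ep 0 = 0"
  unfolding Ep_def by (rule sum.neutral) (metis kin Dzero Xzero lessThan_iff)

lemma cyc_hom: assumes c: "c \<in> kch p" and cy: "dff c = (\<lambda>T. 0)"
  shows "dff (s c) = (\<lambda>T. Ep (c T) + scale (of_int (theta + (\<Sum>i\<in>T. dgf t i))) (c T))"
proof (rule ext)
  fix T show "dff (s c) T = Ep (c T) + scale (of_int (theta + (\<Sum>i\<in>T. dgf t i))) (c T)"
  proof (cases "T \<subseteq> {..<l}")
    case True
    from homotopy[OF True, of c] show ?thesis
      by (simp add: cy s_zero Ep_def theta_def)
  next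
    case False
    then have "c T = 0" using chainsD[OF c] by blast
    then show ?thesis using False by (simp add: diff_alt Ep_zero)
  qed
qed

lemma A_cycle: assumes c: "c \<in> kch p" and cy: "dff c = (\<lambda>T. 0)"
  shows "dff (Op (hA d) c) = (\<lambda>T. 0)"
proof -
  have "dff (Op (hA d) c) = Op (hA d) (dff c)"
    by (rule dff_Op[OF hA_add hA_comm])
  then show ?thesis using cy additive.zero[OF hA_add] by (simp add: Op_def)
qed

lemma main12:
  assumes ge: "gen_eulerian scale n X D G" and m: "m \<le> n" and mk: "\<And>i. i < l \<Longrightarrow> m < k i"
    and dec: "\<And>v. euler X D n v = euler X D m v + Ep v"
    and c: "c \<in> kch p" and cy: "dff c = (\<lambda>T. 0)" and h: "koszul_homog G (dgf t) d c"
  shows "\<exists>a\<ge>1. bnd p ((Op (hF m (of_int (d + theta))) ^^ a) c)"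
proof -
  define F where "F = Op (hF m (of_int (d + theta)))"
  define A where "A = Op (hA d)"
  have Fadd: "\<And>S. additive (hF m (of_int (d + theta)) S)" using hF_add[OF m] .
  have Fcomm: "\<And>T i v. T \<subseteq> {..<l} \<Longrightarrow> i < l \<Longrightarrow> i \<notin> T \<Longrightarrow>
      u i (hF m (of_int (d + theta)) (insert i T) v) = hF m (of_int (d + theta)) T (u i v)"
    by (rule hF_comm[OF m]) (auto intro: mk)
  have key: "F c' = (\<lambda>S. A c' S - dff (s c') S)" if c': "c' \<in> kch p" "dff c' = (\<lambda>T. 0)" for c'
  proof (rule ext)
    fix S
    define \<sigma> where "\<sigma> = (\<Sum>i\<in>S. dgf t i)"
    have sc: "scale (of_int (d - \<sigma>)) v + scale (of_int (theta + \<sigma>)) v = scale (of_int (d + theta)) v" for v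
    proof -
      have "(of_int (d - \<sigma>) + of_int (theta + \<sigma>) :: 'k) = of_int (d + theta)"
        by (simp add: algebra_simps)
      then show ?thesis by (simp add: vs.scale_left_distrib[symmetric])
    qed
    show "F c' S = A c' S - dff (s c') S"
      unfolding cyc_hom[OF c'] F_def A_def Op_def hF_def hA_def dec
      by (simp add: \<sigma>_def[symmetric] sc[symmetric] algebra_simps)
  qed
  have Q: "\<forall>c. c \<in> kch p \<and> dff c = (\<lambda>T. 0) \<and> koszul_homog G (dgf t) d c \<longrightarrow>
     (\<exists>e\<in>kch (p + 1). (F ^^ q) c = (\<lambda>S. (A ^^ q) c S + dff e S))" for q
  proof (induction q)
    case 0
    show ?case using chains_zero dff_zero by (auto intro!: bexI[of _ "\<lambda>S. 0"])
  next
    case (Suc q)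
    show ?case
    proof (intro allI impI)
      fix c assume cc: "c \<in> kch p \<and> dff c = (\<lambda>T. 0) \<and> koszul_homog G (dgf t) d c"
      have Ac: "A c \<in> kch p \<and> dff (A c) = (\<lambda>T. 0) \<and> koszul_homog G (dgf t) d (A c)"
        using cc unfolding A_def by (auto intro: Op_chain hA_add A_cycle Op_hA_homog)
      from Suc[rule_format, OF Ac] obtain e where e: "e \<in> kch (p + 1)"
        "(F ^^ q) (A c) = (\<lambda>S. (A ^^ q) (A c) S + dff e S)" by blast
      have sc: "s c \<in> kch (p + 1)" using s_chain cc by blast
      define e' where "e' = (\<lambda>S. e S - (F ^^ q) (s c) S)"
      have e'c: "e' \<in> kch (p + 1)" unfolding e'_def F_def
        by (intro chains_sub e Op_pow_chain Fadd sc)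
      have "(F ^^ Suc q) c = (F ^^ q) (F c)" by (simp only: funpow_Suc_right o_apply)
      also have "\<dots> = (F ^^ q) (\<lambda>S. A c S - dff (s c) S)" using key cc by simp
      also have "\<dots> = (\<lambda>S. (F ^^ q) (A c) S - (F ^^ q) (dff (s c)) S)"
        unfolding F_def by (rule Op_pow_sub[OF Fadd])
      also have "(F ^^ q) (dff (s c)) = dff ((F ^^ q) (s c))"
        unfolding F_def by (rule dff_Op_pow[OF Fadd Fcomm, symmetric])
      also have "(\<lambda>S. (F ^^ q) (A c) S - dff ((F ^^ q) (s c)) S) = (\<lambda>S. (A ^^ Suc q) c S + dff e' S)"
        unfolding e(2) e'_def dff_sub funpow_Suc_right o_apply by (simp add: algebra_simps)
      finally show "\<exists>e\<in>kch (p + 1). (F ^^ Suc q) c = (\<lambda>S. (A ^^ Suc q) c S + dff e S)"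
        using e'c by blast
    qed
  qed
  obtain a where a: "a \<ge> 1" "(A ^^ a) c = (\<lambda>S. 0)" using A_nil[OF ge c h] unfolding A_def by blast
  from Q[of a, rule_format] c cy h obtain e where e: "e \<in> kch (p + 1)" "(F ^^ a) c = (\<lambda>S. (A ^^ a) c S + dff e S)"
    by blast
  have "(F ^^ a) c = dff e" using e(2) a(2) by simp
  then have "bnd p ((F ^^ a) c)" using bnd_dff[OF e(1)] by simp
  then show ?thesis using a(1) unfolding F_def by blast
qed

lemma main3:
  assumes ge: "gen_eulerian scale n X D G"
    and dec: "\<And>v. Ep v = euler X D n v" and nz: "d + theta \<noteq> 0"
    and c: "c \<in> kch p" and cy: "dff c = (\<lambda>T. 0)" and h: "koszul_homog G (dgf t) d c"
  shows "bnd p c"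
proof -
  define A where "A = Op (hA d)"
  define lam where "lam = (of_int (d + theta) :: 'k)"
  have lnz: "lam \<noteq> 0" using nz unfolding lam_def by (simp only: of_int_eq_0_iff) simp
  have key: "(\<lambda>S. scale lam (c' S)) = (\<lambda>S. dff (s c') S - A c' S)" if c': "c' \<in> kch p" "dff c' = (\<lambda>T. 0)" for c'
  proof (rule ext)
    fix S
    define \<sigma> where "\<sigma> = (\<Sum>i\<in>S. dgf t i)"
    have sc: "scale (of_int (d - \<sigma>)) v + scale (of_int (theta + \<sigma>)) v = scale (of_int (d + theta)) v" for v
    proof -
      have "(of_int (d - \<sigma>) + of_int (theta + \<sigma>) :: 'k) = of_int (d + theta)"
        by (simp add: algebra_simps)
      then show ?thesis by (simp add: vs.scale_left_distrib[symmetric])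
    qed
    show "scale lam (c' S) = dff (s c') S - A c' S"
      unfolding cyc_hom[OF c'] A_def Op_def hA_def dec lam_def
      by (simp add: \<sigma>_def[symmetric] sc[symmetric] algebra_simps)
  qed
  have P: "\<forall>c. c \<in> kch p \<and> dff c = (\<lambda>T. 0) \<and> koszul_homog G (dgf t) d c \<and> bnd p ((A ^^ q) c) \<longrightarrow> bnd p c" for q
  proof (induction q)
    case 0
    show ?case by simp
  next
    case (Suc q)
    show ?case
    proof (intro allI impI)
      fix c assume cc: "c \<in> kch p \<and> dff c = (\<lambda>T. 0) \<and> koszul_homog G (dgf t) d c \<and> bnd p ((A ^^ Suc q) c)"
      have Ac: "A c \<in> kch p \<and> dff (A c) = (\<lambda>T. 0) \<and> koszul_homog G (dgf t) d (A c)"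
        using cc unfolding A_def by (auto intro: Op_chain hA_add A_cycle Op_hA_homog)
      have "bnd p ((A ^^ q) (A c))" using cc by (simp only: funpow_Suc_right o_apply)
      then have bA: "bnd p (A c)" using Suc Ac by blast
      have "bnd p (\<lambda>S. dff (s c) S - A c S)"
        by (rule bnd_sub[OF bnd_dff[OF s_chain] bA]) (use cc in blast)
      then have "bnd p (\<lambda>S. scale lam (c S))" using key cc by simp
      then have "bnd p (\<lambda>S. scale (inverse lam) (scale lam (c S)))" by (rule bnd_scale)
      then show "bnd p c" using lnz by (simp add: vs.scale_scale)
    qed
  qed
  obtain a where a: "(A ^^ a) c = (\<lambda>S. 0)" using A_nil[OF ge c h] unfolding A_def by blast
  then show ?thesis using P[of a] c cy h bnd_zero by auto
qed

end



lemma split_euler: assumes "1 \<le> r" "r \<le> n"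
  shows "(\<Sum>i=1..n. f i) = (\<Sum>i=1..r-1. f i) + (\<Sum>i<n-r+1. f (r+i :: nat))"
proof -
  have "(\<Sum>i<n-r+1. f (r+i)) = (\<Sum>i\<in>{r..n}. f i)"
  proof (rule sum.reindex_bij_witness[of _ "\<lambda>j. j - r" "\<lambda>i. r + i"])
  qed (use assms in auto)
  moreover have "{1..n} = {1..r-1} \<union> {r..n}" using assms by auto
  moreover have "(\<Sum>i\<in>{1..r-1} \<union> {r..n}. f i) = (\<Sum>i=1..r-1. f i) + (\<Sum>i\<in>{r..n}. f i)"
    by (rule sum.union_disjoint) auto
  ultimately show ?thesis by simp
qed

theorem theorem1p4:
  fixes scale :: "'k::field_char_0 \<Rightarrow> 'v::ab_group_add \<Rightarrow> 'v"
    and n r :: nat and X D :: "nat \<Rightarrow> 'v \<Rightarrow> 'v" and G :: "int \<Rightarrow> 'v set"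
  assumes "graded_weyl_module scale n X D G"
    and "gen_eulerian scale n X D G"
    and "1 \<le> r" and "r \<le> n"
  shows "(\<forall>\<nu>. koszul_coh_gen_eulerian scale (r - 1) X D G (n - r + 1)
                 (\<lambda>i. D (r + i)) (\<lambda>i. -1) \<nu> (- int n + int r - 1)) \<and>
         (\<forall>\<nu>. koszul_coh_gen_eulerian scale (r - 1) X D G (n - r + 1)
                 (\<lambda>i. X (r + i)) (\<lambda>i. 1) \<nu> 0) \<and>
         (\<forall>\<nu>. koszul_coh_concentrated G n
                 (\<lambda>i. if i < r - 1 then X (i + 1) else D (i + 1))
                 (\<lambda>i. if i < r - 1 then 1 else -1) \<nu> (- int n + int r - 1))"
proof -
  note gw = assms(1) and ge = assms(2) and r = assms(3,4)
  interpret W: wk scale n X D G by (rule wk.intro[OF gw])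
  interpret K1: kz scale n X D G "n - r + 1" "\<lambda>i. r + i" "\<lambda>i. False"
    by (rule kz.intro[OF W.wk_axioms]) (unfold_locales, use r in \<open>auto simp: inj_on_def\<close>)
  interpret K2: kz scale n X D G "n - r + 1" "\<lambda>i. r + i" "\<lambda>i. True"
    by (rule kz.intro[OF W.wk_axioms]) (unfold_locales, use r in \<open>auto simp: inj_on_def\<close>)
  interpret K3: kz scale n X D G n "\<lambda>i. i + 1" "\<lambda>i. i < r - 1"
    by (rule kz.intro[OF W.wk_axioms]) (unfold_locales, auto simp: inj_on_def)
  have dec12: "euler X D n v = euler X D (r - 1) v + (\<Sum>i<n - r + 1. X (r + i) (D (r + i) v))" for v
    unfolding euler_def by (rule split_euler[OF r])
  have P1: "koszul_coh_gen_eulerian scale (r - 1) X D G (n - r + 1)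
                 (\<lambda>i. D (r + i)) (\<lambda>i. -1) \<nu> (- int n + int r - 1)" for \<nu>
    unfolding koszul_coh_gen_eulerian_def koszul_cycle_def
  proof (intro allI impI)
    fix d c
    assume a: "(c \<in> koszul_chains (n - r + 1) (int (n - r + 1) - int \<nu>) \<and>
        koszul_diff (n - r + 1) (\<lambda>i. D (r + i)) c = (\<lambda>T. 0)) \<and> koszul_homog G (\<lambda>i. - 1) d c"
    have u: "uop X D (\<lambda>i. r + i) (\<lambda>i. False) = (\<lambda>i. D (r + i))" by (rule ext) (simp add: uop_def)
    have dg: "dgf (\<lambda>i. False) = (\<lambda>i. -1)" by (rule ext) (simp add: dgf_def)
    have th: "K1.theta = int (n - r + 1)" unfolding K1.theta_def by simp
    have "\<exists>a\<ge>1. K1.bnd (int (n - r + 1) - int \<nu>) ((Op (K1.hF (r - 1) (of_int (d + K1.theta))) ^^ a) c)"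
    proof (rule K1.main12[OF ge])
      show "euler X D n v = euler X D (r - 1) v + K1.Ep v" for v
        unfolding K1.Ep_def by (rule dec12)
    qed (use a r in \<open>auto simp: u dg\<close>)
    moreover have "Op (K1.hF (r - 1) (of_int (d + K1.theta))) =
       (\<lambda>c S. euler X D (r - 1) (c S) - scale (of_int (d - (- int n + int r - 1))) (c S))"
      unfolding th using r by (auto simp: Op_def K1.hF_def of_nat_diff intro!: ext)
    ultimately show "\<exists>a\<ge>1. koszul_boundary (n - r + 1) (\<lambda>i. D (r + i)) (int (n - r + 1) - int \<nu>)
          (((\<lambda>c S. euler X D (r - 1) (c S) - scale (of_int (d - (- int n + int r - 1))) (c S)) ^^ a) c)"
      by (simp add: u)
  qed
  have P2: "koszul_coh_gen_eulerian scale (r - 1) X D G (n - r + 1)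
                 (\<lambda>i. X (r + i)) (\<lambda>i. 1) \<nu> 0" for \<nu>
    unfolding koszul_coh_gen_eulerian_def koszul_cycle_def
  proof (intro allI impI)
    fix d c
    assume a: "(c \<in> koszul_chains (n - r + 1) (int (n - r + 1) - int \<nu>) \<and>
        koszul_diff (n - r + 1) (\<lambda>i. X (r + i)) c = (\<lambda>T. 0)) \<and> koszul_homog G (\<lambda>i. 1) d c"
    have u: "uop X D (\<lambda>i. r + i) (\<lambda>i. True) = (\<lambda>i. X (r + i))" by (rule ext) (simp add: uop_def)
    have dg: "dgf (\<lambda>i. True) = (\<lambda>i. 1)" by (rule ext) (simp add: dgf_def)
    have th: "K2.theta = 0" unfolding K2.theta_def by simp
    have "\<exists>a\<ge>1. K2.bnd (int (n - r + 1) - int \<nu>) ((Op (K2.hF (r - 1) (of_int (d + K2.theta))) ^^ a) c)"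
    proof (rule K2.main12[OF ge])
      show "euler X D n v = euler X D (r - 1) v + K2.Ep v" for v
        unfolding K2.Ep_def by (rule dec12)
    qed (use a r in \<open>auto simp: u dg\<close>)
    moreover have "Op (K2.hF (r - 1) (of_int (d + K2.theta))) =
       (\<lambda>c S. euler X D (r - 1) (c S) - scale (of_int (d - 0)) (c S))"
      unfolding th by (auto simp: Op_def K2.hF_def intro!: ext)
    ultimately show "\<exists>a\<ge>1. koszul_boundary (n - r + 1) (\<lambda>i. X (r + i)) (int (n - r + 1) - int \<nu>)
          (((\<lambda>c S. euler X D (r - 1) (c S) - scale (of_int (d - 0)) (c S)) ^^ a) c)"
      by (simp add: u)
  qed
  have P3: "koszul_coh_concentrated G n
                 (\<lambda>i. if i < r - 1 then X (i + 1) else D (i + 1))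
                 (\<lambda>i. if i < r - 1 then 1 else -1) \<nu> (- int n + int r - 1)" for \<nu>
    unfolding koszul_coh_concentrated_def koszul_cycle_def
  proof (intro allI impI)
    fix d c
    assume a: "(c \<in> koszul_chains n (int n - int \<nu>) \<and>
        koszul_diff n (\<lambda>i. if i < r - 1 then X (i + 1) else D (i + 1)) c = (\<lambda>T. 0)) \<and>
       koszul_homog G (\<lambda>i. if i < r - 1 then 1 else - 1) d c \<and> d \<noteq> - int n + int r - 1"
    have u: "uop X D (\<lambda>i. i + 1) (\<lambda>i. i < r - 1) = (\<lambda>i. if i < r - 1 then X (i + 1) else D (i + 1))"
      by (rule ext) (simp add: uop_def)
    have dg: "dgf (\<lambda>i. i < r - 1) = (\<lambda>i. if i < r - 1 then 1 else -1)" by (rule ext) (simp add: dgf_def)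
    have "{i\<in>{..<n}. \<not> i < r - 1} = {r - 1..<n}" by auto
    then have th: "K3.theta = int (n - (r - 1))" unfolding K3.theta_def by simp
    have dec3: "K3.Ep v = euler X D n v" for v
      unfolding K3.Ep_def euler_def by (simp add: sum.atLeast1_atMost_eq)
    have nz: "d + K3.theta \<noteq> 0" unfolding th using a r by auto
    have cy: "koszul_diff n (uop X D (\<lambda>i. i + 1) (\<lambda>i. i < r - 1)) c = (\<lambda>T. 0)"
      unfolding u using a by blast
    have h: "koszul_homog G (dgf (\<lambda>i. i < r - 1)) d c" unfolding dg using a by blast
    have ch: "c \<in> koszul_chains n (int n - int \<nu>)" using a by blast
    have "K3.bnd (int n - int \<nu>) c"
      by (rule K3.main3[OF ge dec3 nz ch cy h])
    then show "koszul_boundary n (\<lambda>i. if i < r - 1 then X (i + 1) else D (i + 1)) (int n - int \<nu>) c"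
      unfolding u .
  qed
  show ?thesis using P1 P2 P3 by blast
qed


end
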